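(* Consider the online convex optimization setting with stochastic gradients described in the context, and run Algorithm 1 with $N=\frac{\beta D}{\sigma}\sqrt{T}$ (assumed to be a positive integer), so that it makes $N$ stochastic gradient oracle calls per round and no projections. Suppose each of the $N$ online linear optimizers is instantiated with an online linear optimizer (e.g. Follow the Perturbed Leader) whose expected regret on linear losses $x\mapsto g^\top x$ with $\|g\|\le\sigma$ over $\mathcal K$ is $O(\sigma D\sqrt T)$. Then for any sequence of convex losses $\ell_1,\dots,\ell_T\in\mathcal L$ and any $x^*\in\mathcal K$, \[ \mathbb{E}\Big[\sum_{t=1}^T \ell_t(x_t)-\sum_{t=1}^T \ell_t(x^* )\Big]\le O\big(\sigma D\sqrt T\big), \] where the expectation is over the oracle's randomness and the internal randomness of the online linear optimizers, and $O(\cdot)$ hides absolute constants.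
   Context: Let $\mathcal K\subset\mathbb R^d$ be a compact convex set of diameter $D$ (i.e. $\|x-x'\|\le D$ for all $x,x'\in\mathcal K$). A class $\mathcal L$ of convex functions on $\mathcal K$ is given; the losses $\ell_1,\dots,\ell_T\in\mathcal L$ are fixed in advance (oblivious adversary). Assumptions: (A1) every $\ell\in\mathcal L$ is $\beta$-smooth: $\|\nabla\ell(x)-\nabla\ell(x')\|\le\beta\|x-x'\|$ for all $x,x'\in\mathcal K$; (A2) a stochastic gradient oracle $\mathcal O$, queried at round $t$ at a point $x\in\mathcal K$, returns a random vector $\mathbf g$ (using fresh randomness) with $\mathbb E[\mathbf g]=\nabla\ell_t(x)$ and $\|\mathbf g\|^2\le\sigma^2$. An online linear optimizer (OLO) over $\mathcal K$ is an online algorithm which at each round outputs a point of $\mathcal K$ based on the linear losses $\ell'_s(x)=g_s^\top x$ ($\|g_s\|\le\sigma$) revealed in previous rounds; its regret is $\sum_{t}\ell'_t(x_t)-\min_{x\in\mathcal K}\sum_t\ell'_t(x)$. Algorithm 1: maintain $N$ OLOs $\mathcal A_1,\dots,\mathcal A_N$ and step sizes $\eta_i=\frac{2}{i+1}$. At each round $t=1,\dots,T$: set $\mathbf x_t^0=\mathbf 0$; for $i=1,\dots,N$: let $x_{t,i}\in\mathcal K$ be the output of $\mathcal A_i$ at round $t$ (having seen $\ell^i_1,\dots,\ell^i_{t-1}$), set $\mathbf x_t^i=(1-\eta_i)\mathbf x_t^{i-1}+\eta_i x_{t,i}$, query the oracle at $\mathbf x_t^{i-1}$ to get $\mathbf g_{t,i}$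 with $\mathbb E[\mathbf g_{t,i}]=\nabla\ell_t(\mathbf x_t^{i-1})$, and pass the linear loss $\ell_t^i(x)=\mathbf g_{t,i}^\top x$ to $\mathcal A_i$. The prediction is $x_t=\mathbf x_t^N$, and the loss $\ell_t(x_t)$ is incurred. *)

theory Defs
  imports "HOL-Probability.Probability"
begin

text \<open>Algorithm 1. OLOs are indexed 0..N-1 (paper index i+1), so the step size of
 OLO i is eta = 2/(i+2). Rounds are indexed 0..T-1.
 An OLO A i is a function of its internal random seed r, of the sequence gs of linear loss
 vectors fed to it, and of the round t; causality (output at round t depends only on gs s for
 s < t) is an explicit hypothesis of the theorem.
 The oracle at round s, queried at x with fresh seed w, returns orc s x w.
 fw_iter i A orc rs ws t is the point x_t^i; the seed of OLO i is rs i, the oracle seed of the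
 query made at round s by OLO i is ws (s,i).\<close>

primrec fw_iter ::
  "nat \<Rightarrow> (nat \<Rightarrow> 'r \<Rightarrow> (nat \<Rightarrow> 'a) \<Rightarrow> nat \<Rightarrow> 'a) \<Rightarrow> (nat \<Rightarrow> 'a \<Rightarrow> 'w \<Rightarrow> 'a)
   \<Rightarrow> (nat \<Rightarrow> 'r) \<Rightarrow> (nat \<times> nat \<Rightarrow> 'w) \<Rightarrow> nat \<Rightarrow> 'a::real_vector" where
  "fw_iter 0 A orc rs ws = (\<lambda>t. 0)"
| "fw_iter (Suc i) A orc rs ws =
     (\<lambda>t. (1 - 2 / (real i + 2)) *\<^sub>R fw_iter i A orc rs ws t
          + (2 / (real i + 2)) *\<^sub>R
              A i (rs i) (\<lambda>s. orc s (fw_iter i A orc rs ws s) (ws (s, i))) t)"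

definition seed_space :: "nat \<Rightarrow> nat \<Rightarrow> (nat \<Rightarrow> 'r measure) \<Rightarrow> 'w measure
    \<Rightarrow> ((nat \<Rightarrow> 'r) \<times> (nat \<times> nat \<Rightarrow> 'w)) measure" where
  "seed_space N T R W = (PiM {..<N} R) \<Otimes>\<^sub>M (PiM ({..<T} \<times> {..<N}) (\<lambda>_. W))"

end

theory Submission
  imports Defs
begin

lemma resample_PiM:
  fixes g :: "('i \<Rightarrow> 'b) \<Rightarrow> real"
  assumes I: "finite I" "i \<in> I" and M: "\<And>j. j \<in> I \<Longrightarrow> prob_space (M j)"
    and g: "g \<in> borel_measurable (PiM I M)"
    and B: "\<And>a. a \<in> space (PiM I M) \<Longrightarrow> \<bar>g a\<bar> \<le> B"
    and c: "\<And>a. a \<in> space (PiM I M) \<Longrightarrow> (\<integral>y. g (a(i:=y)) \<partial>M i) \<le> c"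
  shows "integral\<^sup>L (PiM I M) g \<le> c"
proof -
  define M' where "M' = (\<lambda>j. if j \<in> I then M j else count_space {undefined})"
  have PM: "PiM I M' = PiM I M" "PiM (I - {i}) M' = PiM (I - {i}) M"
    by (auto simp: M'_def intro!: PiM_cong)
  have Mi: "M' i = M i" using I by (simp add: M'_def)
  interpret product_sigma_finite M'
  proof (rule product_sigma_finite.intro)
    fix j show "sigma_finite_measure (M' j)"
    using M[of j] by (cases "j \<in> I")
      (auto simp: M'_def prob_space_def finite_measure_def sigma_finite_measure_count_space_finite)
  qed
  have ins: "insert i (I - {i}) = I" using I by auto
  interpret P: prob_space "PiM I M" by (rule prob_space_PiM) (rule M)
  interpret Pm: prob_space "PiM (I - {i}) M" by (rule prob_space_PiM) (rule M, auto)
  interpret Mi: prob_space "M i" using I M by auto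
  have gi: "integrable (PiM I M) g"
    using B g by (intro P.integrable_const_bound[where B=B]) auto
  have "integral\<^sup>L (PiM I M) g = (\<integral>x. (\<integral>y. g (x(i:=y)) \<partial>M' i) \<partial>PiM (I - {i}) M')"
    using product_integral_insert[of "I - {i}" i g] I gi ins PM by simp
  also have "\<dots> = (\<integral>x. (\<integral>y. g (x(i:=y)) \<partial>M i) \<partial>PiM (I - {i}) M)"
    using PM Mi by simp
  also have "\<dots> \<le> c"
  proof (rule Pm.integral_le_const)
    have g': "g \<in> borel_measurable (PiM (insert i (I-{i})) M)" using g ins by simp
    have meas: "(\<lambda>(x, y). g (x(i:=y))) \<in> borel_measurable (PiM (I - {i}) M \<Otimes>\<^sub>M M i)"
      using measurable_compose[OF measurable_add_dim[of i "I - {i}" M] g']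
      by (simp add: case_prod_beta')
    have m2: "(\<lambda>x. \<integral>y. g (x(i:=y)) \<partial>M i) \<in> borel_measurable (PiM (I - {i}) M)"
      using Mi.borel_measurable_lebesgue_integral[of "\<lambda>x y. g (x(i:=y))"] meas by simp
    have sp: "x(i:=y) \<in> space (PiM I M)" if "x \<in> space (PiM (I - {i}) M)" "y \<in> space (M i)" for x y
      using measurable_space[OF measurable_add_dim[of i "I - {i}" M], of "(x,y)"] that ins
      by (simp add: space_pair_measure)
    have bd: "norm (\<integral>y. g (x(i:=y)) \<partial>M i) \<le> B" if x: "x \<in> space (PiM (I - {i}) M)" for x
    proof -
      have m3: "(\<lambda>y. g (x(i:=y))) \<in> borel_measurable (M i)"
        using measurable_compose[OF measurable_Pair1'[OF x] meas] by simp
      have int: "integrable (M i) (\<lambda>y. g (x(i:=y)))"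
        using m3 B sp[OF x] by (intro Mi.integrable_const_bound[where B=B]) auto
      have "norm (\<integral>y. g (x(i:=y)) \<partial>M i) \<le> (\<integral>y. norm (g (x(i:=y))) \<partial>M i)"
        by (rule integral_norm_bound)
      also have "\<dots> \<le> B"
        using int B sp[OF x] by (intro Mi.integral_le_const) auto
      finally show ?thesis .
    qed
    show "integrable (PiM (I - {i}) M) (\<lambda>x. \<integral>y. g (x(i:=y)) \<partial>M i)"
      using m2 bd by (intro Pm.integrable_const_bound[where B=B]) auto
    show "AE x in PiM (I - {i}) M. (\<integral>y. g (x(i:=y)) \<partial>M i) \<le> c"
    proof (rule AE_I2)
      fix x assume x: "x \<in> space (PiM (I - {i}) M)"
      obtain y0 where y0: "y0 \<in> space (M i)" using Mi.not_empty by blast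
      have "x(i:=y0) \<in> space (PiM I M)" using sp x y0 .
      from c[OF this] show "(\<integral>y. g (x(i:=y)) \<partial>M i) \<le> c" by simp
    qed
  qed
  finally show ?thesis .
qed

lemma resample_pair_fst:
  fixes f :: "_ \<Rightarrow> real"
  assumes I: "finite I" "i \<in> I" and M: "\<And>j. j \<in> I \<Longrightarrow> prob_space (M j)"
    and P: "prob_space P"
    and f: "f \<in> borel_measurable (PiM I M \<Otimes>\<^sub>M P)"
    and B: "\<And>w. w \<in> space (PiM I M \<Otimes>\<^sub>M P) \<Longrightarrow> \<bar>f w\<bar> \<le> B"
    and c: "\<And>a b. a \<in> space (PiM I M) \<Longrightarrow> b \<in> space P \<Longrightarrow> (\<integral>y. f (a(i:=y), b) \<partial>M i) \<le> c"
  shows "integral\<^sup>L (PiM I M \<Otimes>\<^sub>M P) f \<le> c"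
proof -
  interpret P1: prob_space "PiM I M" by (rule prob_space_PiM) (rule M)
  interpret P2: prob_space P by (rule P)
  interpret PP: pair_prob_space "PiM I M" P ..
  have fi: "integrable (PiM I M \<Otimes>\<^sub>M P) f"
    using f B by (intro PP.integrable_const_bound[where B=B]) auto
  have fi': "integrable (PiM I M \<Otimes>\<^sub>M P) (\<lambda>(x,y). f (x,y))" using fi by simp
  have "integral\<^sup>L (PiM I M \<Otimes>\<^sub>M P) f = (\<integral>y. (\<integral>x. f (x,y) \<partial>PiM I M) \<partial>P)"
    using PP.integral_snd[OF fi'] by simp
  also have "\<dots> \<le> c"
  proof (rule P2.integral_le_const)
    show "integrable P (\<lambda>y. \<integral>x. f (x, y) \<partial>PiM I M)"
      using PP.integrable_snd[OF fi'] by simp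
    show "AE y in P. (\<integral>x. f (x, y) \<partial>PiM I M) \<le> c"
    proof (rule AE_I2)
      fix y assume y: "y \<in> space P"
      show "(\<integral>x. f (x, y) \<partial>PiM I M) \<le> c"
      proof (rule resample_PiM[OF I M])
        show "(\<lambda>x. f (x, y)) \<in> borel_measurable (PiM I M)"
          using measurable_compose[OF measurable_Pair2'[OF y] f] by simp
        show "\<bar>f (a, y)\<bar> \<le> B" if "a \<in> space (PiM I M)" for a
          using B that y by (simp add: space_pair_measure)
        show "(\<integral>z. f (a(i:=z), y) \<partial>M i) \<le> c" if "a \<in> space (PiM I M)" for a
          using c that y by simp
      qed auto
    qed
  qed
  finally show ?thesis .
qed

lemma resample_pair_snd:
  fixes f :: "_ \<Rightarrow> real"
  assumes I: "finite I" "i \<in> I" and M: "\<And>j. j \<in> I \<Longrightarrow> prob_space (M j)"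
    and P: "prob_space P"
    and f: "f \<in> borel_measurable (P \<Otimes>\<^sub>M PiM I M)"
    and B: "\<And>w. w \<in> space (P \<Otimes>\<^sub>M PiM I M) \<Longrightarrow> \<bar>f w\<bar> \<le> B"
    and c: "\<And>a b. a \<in> space P \<Longrightarrow> b \<in> space (PiM I M) \<Longrightarrow> (\<integral>y. f (a, b(i:=y)) \<partial>M i) \<le> c"
  shows "integral\<^sup>L (P \<Otimes>\<^sub>M PiM I M) f \<le> c"
proof -
  interpret P1: prob_space "PiM I M" by (rule prob_space_PiM) (rule M)
  interpret P2: prob_space P by (rule P)
  interpret PP: pair_prob_space P "PiM I M" ..
  have fi: "integrable (P \<Otimes>\<^sub>M PiM I M) f"
    using f B by (intro PP.integrable_const_bound[where B=B]) auto
  have fi': "integrable (P \<Otimes>\<^sub>M PiM I M) (\<lambda>(x,y). f (x,y))" using fi by simp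
  have "integral\<^sup>L (P \<Otimes>\<^sub>M PiM I M) f = (\<integral>x. (\<integral>y. f (x,y) \<partial>PiM I M) \<partial>P)"
    using PP.integral_fst[OF fi'] by simp
  also have "\<dots> \<le> c"
  proof (rule P2.integral_le_const)
    show "integrable P (\<lambda>x. \<integral>y. f (x, y) \<partial>PiM I M)"
      using PP.integrable_fst[OF fi'] by simp
    show "AE x in P. (\<integral>y. f (x, y) \<partial>PiM I M) \<le> c"
    proof (rule AE_I2)
      fix x assume x: "x \<in> space P"
      show "(\<integral>y. f (x, y) \<partial>PiM I M) \<le> c"
      proof (rule resample_PiM[OF I M])
        show "(\<lambda>y. f (x, y)) \<in> borel_measurable (PiM I M)"
          using measurable_compose[OF measurable_Pair1'[OF x] f] by simp
        show "\<bar>f (x, a)\<bar> \<le> B" if "a \<in> space (PiM I M)" for a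
          using B that x by (simp add: space_pair_measure)
        show "(\<integral>z. f (x, a(i:=z)) \<partial>M i) \<le> c" if "a \<in> space (PiM I M)" for a
          using c that x by simp
      qed auto
    qed
  qed
  finally show ?thesis .
qed

lemma quad_bound:
  fixes f f' :: "real \<Rightarrow> real" and L :: real
  assumes d: "\<And>s. s \<in> {0..1} \<Longrightarrow> (f has_real_derivative f' s) (at s within {0..1})"
    and b: "\<And>s. s \<in> {0..1} \<Longrightarrow> \<bar>f' s - f' 0\<bar> \<le> L * s"
  shows "\<bar>f 1 - f 0 - f' 0\<bar> \<le> L / 2"
proof -
  define p where "p s = f s - s * f' 0 - L * s^2 / 2" for s
  define q where "q s = f s - s * f' 0 + L * s^2 / 2" for s
  have dp: "(p has_derivative ((*) (f' s - f' 0 - L * s))) (at s within {0..1})" if "s \<in> {0..1}" for s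
  proof -
    have "(p has_real_derivative (f' s - f' 0 - L * (2 * s^1) / 2)) (at s within {0..1})"
      unfolding p_def using d[OF that] by (auto intro!: derivative_eq_intros)
    then show ?thesis by (simp add: has_field_derivative_def mult.commute)
  qed
  have dq: "(q has_derivative ((*) (f' s - f' 0 + L * s))) (at s within {0..1})" if "s \<in> {0..1}" for s
  proof -
    have "(q has_real_derivative (f' s - f' 0 + L * (2 * s^1) / 2)) (at s within {0..1})"
      unfolding q_def using d[OF that] by (auto intro!: derivative_eq_intros)
    then show ?thesis by (simp add: has_field_derivative_def mult.commute)
  qed
  obtain s1 where s1: "s1 \<in> {0..1}" "p 1 - p 0 = (f' s1 - f' 0 - L * s1) * (1 - 0)"
    using mvt_very_simple[of 0 1 p "\<lambda>s. (*) (f' s - f' 0 - L * s)"] dp by auto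
  obtain s2 where s2: "s2 \<in> {0..1}" "q 1 - q 0 = (f' s2 - f' 0 + L * s2) * (1 - 0)"
    using mvt_very_simple[of 0 1 q "\<lambda>s. (*) (f' s - f' 0 + L * s)"] dq by auto
  have "p 1 - p 0 \<le> 0" using s1 b[OF s1(1)] by simp
  moreover have "q 1 - q 0 \<ge> 0" using s2 b[OF s2(1)] by simp
  ultimately show ?thesis unfolding p_def q_def abs_le_iff by simp
qed

locale fwloc =
  fixes K :: "'a::euclidean_space set" and D \<beta> \<sigma> C :: real and T N :: nat
    and loss :: "nat \<Rightarrow> 'a \<Rightarrow> real" and grad :: "nat \<Rightarrow> 'a \<Rightarrow> 'a"
    and orc :: "nat \<Rightarrow> 'a \<Rightarrow> 'w \<Rightarrow> 'a" and W :: "'w measure"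
    and A :: "nat \<Rightarrow> 'r \<Rightarrow> (nat \<Rightarrow> 'a) \<Rightarrow> nat \<Rightarrow> 'a" and R :: "nat \<Rightarrow> 'r measure"
    and xstar :: 'a
  assumes K_compact: "compact K" and K_convex: "convex K" and K_zero: "0 \<in> K"
    and diam: "\<forall>x\<in>K. \<forall>y\<in>K. norm (x - y) \<le> D"
    and sigma_pos: "\<sigma> > 0"
    and N_pos: "N \<ge> 1" and N_def: "real N = \<beta> * D * sqrt (real T) / \<sigma>"
    and loss_convex: "\<forall>t<T. convex_on K (loss t)"
    and loss_grad: "\<forall>t<T. \<forall>x\<in>K. (loss t has_derivative (\<lambda>h. grad t x \<bullet> h)) (at x within K)"
    and smooth: "\<forall>t<T. \<forall>x\<in>K. \<forall>y\<in>K. norm (grad t x - grad t y) \<le> \<beta> * norm (x - y)"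
    and W_prob: "prob_space W"
    and orc_meas: "\<forall>t<T. (\<lambda>(x, w). orc t x w) \<in> borel_measurable (borel \<Otimes>\<^sub>M W)"
    and orc_unbiased: "\<forall>t<T. \<forall>x\<in>K. integrable W (orc t x) \<and> (\<integral>w. orc t x w \<partial>W) = grad t x"
    and orc_bound: "\<forall>t<T. \<forall>x\<in>K. \<forall>w\<in>space W. (norm (orc t x w))\<^sup>2 \<le> \<sigma>\<^sup>2"
    and R_prob: "\<forall>i<N. prob_space (R i)"
    and A_meas: "\<forall>i<N. \<forall>t. (\<lambda>(r, gs). A i r gs t)
                    \<in> borel_measurable (R i \<Otimes>\<^sub>M PiM UNIV (\<lambda>_::nat. (borel :: 'a measure)))"
    and A_in_K: "\<forall>i<N. \<forall>r\<in>space (R i). \<forall>gs t. A i r gs t \<in> K"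
    and A_causal: "\<forall>i<N. \<forall>r gs gs' t. (\<forall>s<t. gs s = gs' s) \<longrightarrow> A i r gs t = A i r gs' t"
    and A_regret: "\<forall>i<N. \<forall>gs. (\<forall>t<T. norm (gs t) \<le> \<sigma>) \<longrightarrow>
                    (\<forall>x\<in>K. (\<integral>r. (\<Sum>t<T. gs t \<bullet> A i r gs t) \<partial>R i) - (\<Sum>t<T. gs t \<bullet> x)
                              \<le> C * \<sigma> * D * sqrt (real T))"
    and xstar_K: "xstar \<in> K"
begin

lemma D_nonneg: "D \<ge> 0" using diam K_zero by force

lemma pos_facts: "D > 0" "\<beta> > 0" "T > 0"
proof -
  have "\<beta> * D * sqrt (real T) / \<sigma> > 0" using N_pos N_def by (metis of_nat_0_less_iff less_le_trans zero_less_one)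
  then have *: "\<beta> * D * sqrt (real T) > 0" using sigma_pos by (simp add: zero_less_divide_iff)
  have "D \<noteq> 0" using * by (metis mult_zero_right mult_zero_left less_irrefl)
  then show Dp: "D > 0" using D_nonneg by auto
  have "sqrt (real T) \<noteq> 0" using * by (metis mult_zero_right less_irrefl)
  then show "T > 0" by (metis gr0I of_nat_0 real_sqrt_zero)
  with * Dp show "\<beta> > 0" by (simp add: zero_less_mult_iff)
qed

lemma smooth_ineq:
  assumes t: "t < T" and x: "x \<in> K" and y: "y \<in> K"
  shows "\<bar>loss t y - loss t x - grad t x \<bullet> (y - x)\<bar> \<le> \<beta> / 2 * (norm (y - x))^2"
proof -
  define d where "d = y - x"
  define f where "f s = loss t (x + s *\<^sub>R d)" for s
  define f' where "f' s = grad t (x + s *\<^sub>R d) \<bullet> d" for s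
  have inK: "x + s *\<^sub>R d \<in> K" if "s \<in> {0..1}" for s
  proof -
    have "x + s *\<^sub>R d = (1 - s) *\<^sub>R x + s *\<^sub>R y" by (simp add: d_def algebra_simps)
    then show ?thesis using convexD[OF K_convex x y, of "1 - s" s] that by auto
  qed
  have img: "(\<lambda>s. x + s *\<^sub>R d) ` {0..1} \<subseteq> K" using inK by auto
  have "(f has_real_derivative f' s) (at s within {0..1})" if s: "s \<in> {0..1}" for s
  proof -
    have p: "((\<lambda>s. x + s *\<^sub>R d) has_derivative (\<lambda>h. h *\<^sub>R d)) (at s within {0..1})"
      by (auto intro!: derivative_eq_intros)
    have "(f has_derivative (\<lambda>h. grad t (x + s *\<^sub>R d) \<bullet> (h *\<^sub>R d))) (at s within {0..1})"
      unfolding f_def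
      by (rule has_derivative_in_compose2[OF _ img s p, of "loss t" "\<lambda>z h. grad t z \<bullet> h"])
        (use loss_grad t in auto)
    from has_derivative_eq_rhs[OF this, of "(*) (f' s)"] show ?thesis
      unfolding has_field_derivative_def f'_def by (simp add: fun_eq_iff)
  qed
  moreover have "\<bar>f' s - f' 0\<bar> \<le> (\<beta> * (norm d)^2) * s" if s: "s \<in> {0..1}" for s
  proof -
    have "\<bar>f' s - f' 0\<bar> = \<bar>(grad t (x + s *\<^sub>R d) - grad t x) \<bullet> d\<bar>"
      by (simp add: f'_def inner_diff_left)
    also have "\<dots> \<le> norm (grad t (x + s *\<^sub>R d) - grad t x) * norm d"
      by (rule Cauchy_Schwarz_ineq2)
    also have "\<dots> \<le> (\<beta> * norm ((x + s *\<^sub>R d) - x)) * norm d"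
    proof (rule mult_right_mono)
      show "norm (grad t (x + s *\<^sub>R d) - grad t x) \<le> \<beta> * norm ((x + s *\<^sub>R d) - x)"
        using smooth t inK[OF s] x by blast
    qed simp
    also have "\<dots> = (\<beta> * norm (s *\<^sub>R d)) * norm d" by simp
    also have "\<dots> = (\<beta> * (norm d)^2) * s" using s by (simp add: power2_eq_square)
    finally show ?thesis .
  qed
  ultimately have "\<bar>f 1 - f 0 - f' 0\<bar> \<le> (\<beta> * (norm d)^2) / 2"
    by (rule quad_bound)
  then show ?thesis by (simp add: f_def f'_def d_def)
qed

lemma small_le:
  fixes a b c :: real
  assumes c: "c \<ge> 0" and h: "\<And>s. 0 < s \<Longrightarrow> s \<le> 1 \<Longrightarrow> a \<le> b + c * s"
  shows "a \<le> b"
proof (rule ccontr)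
  assume "\<not> a \<le> b"
  then have e: "a - b > 0" by simp
  define s where "s = min 1 ((a - b) / (2 * (c + 1)))"
  have s0: "s > 0" using e c by (simp add: s_def)
  have s1: "s \<le> 1" by (simp add: s_def)
  have "c * s \<le> c * ((a - b) / (2 * (c + 1)))" using c by (intro mult_left_mono) (auto simp: s_def)
  also have "\<dots> < a - b"
  proof -
    have "c * ((a - b) / (2 * (c + 1))) = (a - b) * (c / (2 * (c + 1)))" by simp
    also have "\<dots> < (a - b) * 1" using e c by (intro mult_strict_left_mono) (auto simp: field_simps)
    finally show ?thesis by simp
  qed
  finally show False using h[OF s0 s1] by simp
qed

lemma convex_grad:
  assumes t: "t < T" and x: "x \<in> K" and y: "y \<in> K"
  shows "loss t x + grad t x \<bullet> (y - x) \<le> loss t y"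
proof -
  have "grad t x \<bullet> (y - x) \<le> (loss t y - loss t x) + (\<beta> / 2 * (norm (y - x))^2) * s"
    if s: "0 < s" "s \<le> 1" for s
  proof -
    define z where "z = (1 - s) *\<^sub>R x + s *\<^sub>R y"
    have zK: "z \<in> K" using convexD[OF K_convex x y, of "1 - s" s] s by (auto simp: z_def)
    have zx: "z - x = s *\<^sub>R (y - x)" by (simp add: z_def algebra_simps)
    have cv: "loss t z \<le> (1 - s) * loss t x + s * loss t y"
      using convex_onD[OF loss_convex[rule_format, OF t], of s x y] s x y by (simp add: z_def)
    have sm: "\<bar>loss t z - loss t x - grad t x \<bullet> (z - x)\<bar> \<le> \<beta> / 2 * (norm (z - x))^2"
      by (rule smooth_ineq[OF t x zK])
    have e1: "grad t x \<bullet> (z - x) = s * (grad t x \<bullet> (y - x))" by (simp add: zx)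
    have e2: "(norm (z - x))^2 = s^2 * (norm (y - x))^2" using s by (simp add: zx power_mult_distrib)
    have "s * (grad t x \<bullet> (y - x)) - \<beta> / 2 * (s^2 * (norm (y - x))^2) \<le> s * (loss t y - loss t x)"
    proof -
      have "(1 - s) * loss t x + s * loss t y - loss t x = s * (loss t y - loss t x)"
        by (simp add: algebra_simps)
      then show ?thesis using cv sm unfolding e1 e2 abs_le_iff by linarith
    qed
    moreover have "\<beta> / 2 * (s^2 * (norm (y - x))^2) = s * ((\<beta> / 2 * (norm (y - x))^2) * s)"
      by (simp add: power2_eq_square)
    ultimately have "s * (grad t x \<bullet> (y - x)) \<le> s * ((loss t y - loss t x) + (\<beta> / 2 * (norm (y - x))^2) * s)"
      by (simp only: distrib_left)
    then show ?thesis using s by simp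
  qed
  note h = this
  have c0: "\<beta> / 2 * (norm (y - x))^2 \<ge> 0" using pos_facts by simp
  have "grad t x \<bullet> (y - x) \<le> loss t y - loss t x"
    by (rule small_le[OF c0 h])
  then show ?thesis by simp
qed

end

context fwloc
begin

abbreviation "M \<equiv> seed_space N T R W"

definition X where "X i \<omega> t = fw_iter i A orc (fst \<omega>) (snd \<omega>) t"
definition G where "G i \<omega> s = orc s (X i \<omega> s) (snd \<omega> (s, i))"
definition V where "V i \<omega> t = A i (fst \<omega> i) (G i \<omega>) t"
definition eta :: "nat \<Rightarrow> real" where "eta i = 2 / (real i + 2)"

lemma X_Suc: "X (Suc i) \<omega> t = (1 - eta i) *\<^sub>R X i \<omega> t + eta i *\<^sub>R V i \<omega> t"
  by (simp add: X_def V_def G_def[abs_def] eta_def)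

lemma X_0: "X 0 \<omega> t = 0" by (simp add: X_def)

lemma eta_bounds: "0 \<le> eta i" "eta i \<le> 1"
  by (auto simp: eta_def)

lemma M_prob: "prob_space M"
  unfolding seed_space_def
  by (intro prob_space_pair prob_space_PiM) (use R_prob W_prob in auto)

lemma space_M:
  assumes "\<omega> \<in> space M"
  shows "\<And>j. j < N \<Longrightarrow> fst \<omega> j \<in> space (R j)"
    and "\<And>s j. s < T \<Longrightarrow> j < N \<Longrightarrow> snd \<omega> (s, j) \<in> space W"
  using assms by (auto simp: seed_space_def space_pair_measure space_PiM PiE_def Pi_def)

lemma space_M_iff: "\<omega> \<in> space M \<longleftrightarrow> fst \<omega> \<in> space (PiM {..<N} R) \<and> snd \<omega> \<in> space (PiM ({..<T} \<times> {..<N}) (\<lambda>_. W))"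
  by (cases \<omega>) (simp add: seed_space_def space_pair_measure)

lemma norm_K: "x \<in> K \<Longrightarrow> norm x \<le> D"
  using diam K_zero by force

lemma V_in_K: "\<omega> \<in> space M \<Longrightarrow> i < N \<Longrightarrow> V i \<omega> t \<in> K"
proof -
  assume a: "\<omega> \<in> space M" "i < N"
  have "fst \<omega> i \<in> space (R i)" by (rule space_M(1)[OF a])
  then show ?thesis unfolding V_def using A_in_K a(2) by blast
qed

lemma X_in_K: "\<omega> \<in> space M \<Longrightarrow> i \<le> N \<Longrightarrow> X i \<omega> t \<in> K"
proof (induction i arbitrary: t)
  case 0 then show ?case by (simp add: X_0 K_zero)
next
  case (Suc i)
  have x1: "X i \<omega> t \<in> K" using Suc.IH Suc.prems by simp
  have x2: "V i \<omega> t \<in> K" using V_in_K Suc.prems by simp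
  have "(1 - eta i) *\<^sub>R X i \<omega> t + eta i *\<^sub>R V i \<omega> t \<in> K"
    using convexD[OF K_convex x1 x2, of "1 - eta i" "eta i"] eta_bounds[of i]
    by simp
  then show ?case by (simp add: X_Suc)
qed

lemma G_bound: "\<omega> \<in> space M \<Longrightarrow> i < N \<Longrightarrow> s < T \<Longrightarrow> norm (G i \<omega> s) \<le> \<sigma>"
proof -
  assume a: "\<omega> \<in> space M" "i < N" "s < T"
  have xk: "X i \<omega> s \<in> K" using X_in_K[OF a(1)] a(2) by simp
  have wk: "snd \<omega> (s, i) \<in> space W" by (rule space_M(2)[OF a(1) a(3) a(2)])
  have "(norm (G i \<omega> s))\<^sup>2 \<le> \<sigma>\<^sup>2"
    unfolding G_def by (rule orc_bound[rule_format, OF a(3) xk wk])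
  have "0 \<le> \<sigma>" using sigma_pos by simp
  from power2_le_imp_le[OF \<open>(norm (G i \<omega> s))\<^sup>2 \<le> \<sigma>\<^sup>2\<close> this] show ?thesis .
qed

lemma fw_cong:
  assumes "i \<le> N" "\<forall>j<i. rs j = rs' j" "\<forall>j<i. \<forall>s<t. ws (s, j) = ws' (s, j)"
  shows "fw_iter i A orc rs ws t = fw_iter i A orc rs' ws' t"
  using assms
proof (induction i arbitrary: t)
  case 0 then show ?case by simp
next
  case (Suc i)
  have ih: "fw_iter i A orc rs ws s = fw_iter i A orc rs' ws' s" if "s \<le> t" for s
    using Suc.IH[of s] Suc.prems that by auto
  have "A i (rs i) (\<lambda>s. orc s (fw_iter i A orc rs ws s) (ws (s, i))) t
      = A i (rs' i) (\<lambda>s. orc s (fw_iter i A orc rs' ws' s) (ws' (s, i))) t"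
  proof -
    have "A i (rs i) (\<lambda>s. orc s (fw_iter i A orc rs ws s) (ws (s, i))) t
      = A i (rs i) (\<lambda>s. orc s (fw_iter i A orc rs' ws' s) (ws' (s, i))) t"
    proof -
      have iN: "i < N" using Suc.prems by simp
      show ?thesis
        by (rule A_causal[rule_format, OF iN]) (use ih Suc.prems(3) in simp)
    qed
    then show ?thesis using Suc.prems by simp
  qed
  then show ?case using ih[of t] by simp
qed

lemma meas_rs: "i < N \<Longrightarrow> (\<lambda>\<omega>. fst \<omega> i) \<in> measurable M (R i)"
  unfolding seed_space_def
  by (rule measurable_compose[OF measurable_fst measurable_component_singleton]) simp

lemma meas_ws: "s < T \<Longrightarrow> j < N \<Longrightarrow> (\<lambda>\<omega>. snd \<omega> (s, j)) \<in> measurable M W"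
  unfolding seed_space_def
  by (rule measurable_compose[OF measurable_snd measurable_component_singleton]) simp

lemma G_meas:
  assumes i: "i < N" and s: "s < T" and X: "(\<lambda>\<omega>. X i \<omega> s) \<in> borel_measurable M"
  shows "(\<lambda>\<omega>. G i \<omega> s) \<in> borel_measurable M"
proof -
  have p: "(\<lambda>\<omega>. (X i \<omega> s, snd \<omega> (s, i))) \<in> measurable M (borel \<Otimes>\<^sub>M W)"
    by (rule measurable_Pair[OF X meas_ws[OF s i]])
  have o: "(\<lambda>(x, w). orc s x w) \<in> borel_measurable (borel \<Otimes>\<^sub>M W)"
    using orc_meas s by blast
  from measurable_compose[OF p o] show ?thesis by (simp add: G_def)
qed

lemma V_meas:
  assumes i: "i < N" and t: "t < T" and X: "\<And>s. s < T \<Longrightarrow> (\<lambda>\<omega>. X i \<omega> s) \<in> borel_measurable M"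
  shows "(\<lambda>\<omega>. V i \<omega> t) \<in> borel_measurable M"
proof -
  define Gt where "Gt \<omega> = (\<lambda>s. if s < t then G i \<omega> s else 0)" for \<omega>
  have eq: "V i \<omega> t = A i (fst \<omega> i) (Gt \<omega>) t" for \<omega>
    unfolding V_def by (rule A_causal[rule_format, OF i]) (simp add: Gt_def)
  have gm: "(\<lambda>\<omega>. Gt \<omega>) \<in> measurable M (PiM UNIV (\<lambda>_::nat. (borel :: 'a measure)))"
  proof -
    have "(\<lambda>\<omega> s. (\<lambda>s \<omega>. if s < t then G i \<omega> s else 0) s \<omega>) \<in> measurable M (PiM UNIV (\<lambda>_::nat. (borel :: 'a measure)))"
    proof (rule measurable_PiM_single')
      fix s :: nat
      show "(\<lambda>\<omega>. if s < t then G i \<omega> s else 0) \<in> borel_measurable M"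
      proof (cases "s < t")
        case True
        then have "s < T" using t by simp
        then show ?thesis using True G_meas[OF i _ X] by simp
      qed simp
    qed (simp add: space_PiM)
    then show ?thesis by (simp add: Gt_def[abs_def])
  qed
  have p: "(\<lambda>\<omega>. (fst \<omega> i, Gt \<omega>)) \<in> measurable M (R i \<Otimes>\<^sub>M PiM UNIV (\<lambda>_::nat. (borel :: 'a measure)))"
    by (rule measurable_Pair[OF meas_rs[OF i] gm])
  have a: "(\<lambda>(r, gs). A i r gs t) \<in> borel_measurable (R i \<Otimes>\<^sub>M PiM UNIV (\<lambda>_::nat. (borel :: 'a measure)))"
    using A_meas i by blast
  from measurable_compose[OF p a] show ?thesis by (simp add: eq)
qed

lemma X_meas: "i \<le> N \<Longrightarrow> t < T \<Longrightarrow> (\<lambda>\<omega>. X i \<omega> t) \<in> borel_measurable M"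
proof (induction i arbitrary: t)
  case 0 then show ?case by (simp add: X_0)
next
  case (Suc i)
  have iN: "i < N" using Suc.prems by simp
  have x: "(\<lambda>\<omega>. X i \<omega> t) \<in> borel_measurable M" using Suc.IH iN Suc.prems(2) by simp
  have v: "(\<lambda>\<omega>. V i \<omega> t) \<in> borel_measurable M"
    by (rule V_meas[OF iN Suc.prems(2)]) (use Suc.IH iN in simp)
  have "(\<lambda>\<omega>. (1 - eta i) *\<^sub>R X i \<omega> t + eta i *\<^sub>R V i \<omega> t) \<in> borel_measurable M"
    by (intro borel_measurable_add borel_measurable_scaleR measurable_const x v) auto
  then show ?case by (simp add: X_Suc)
qed

lemma loss_cont: "t < T \<Longrightarrow> continuous_on K (loss t)"
  by (rule has_derivative_continuous_on[of K "loss t" "\<lambda>x h. grad t x \<bullet> h"]) (use loss_grad in blast)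

lemma grad_cont: "t < T \<Longrightarrow> continuous_on K (grad t)"
proof -
  assume t: "t < T"
  have "\<beta>-lipschitz_on K (grad t)"
  proof (rule lipschitz_onI)
    fix x y assume "x \<in> K" "y \<in> K"
    then show "dist (grad t x) (grad t y) \<le> \<beta> * dist x y"
      using smooth t by (simp add: dist_norm)
  qed (use pos_facts in simp)
  then show ?thesis by (rule lipschitz_on_continuous_on)
qed

lemma comp_meas:
  fixes f :: "'a \<Rightarrow> 'b::real_normed_vector"
  assumes f: "continuous_on K f" and h: "h \<in> borel_measurable M" and hK: "\<And>\<omega>. \<omega> \<in> space M \<Longrightarrow> h \<omega> \<in> K"
  shows "(\<lambda>\<omega>. f (h \<omega>)) \<in> borel_measurable M"
proof -
  have Kb: "K \<in> sets borel" using K_compact by (simp add: borel_closed compact_imp_closed)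
  have "(\<lambda>x. indicator K x *\<^sub>R f x) \<in> borel_measurable borel"
    by (rule borel_measurable_continuous_on_indicator[OF Kb f])
  from measurable_compose[OF h this]
  have "(\<lambda>\<omega>. indicator K (h \<omega>) *\<^sub>R f (h \<omega>)) \<in> borel_measurable M" .
  moreover have "\<And>\<omega>. \<omega> \<in> space M \<Longrightarrow> indicator K (h \<omega>) *\<^sub>R f (h \<omega>) = f (h \<omega>)"
    using hK by simp
  ultimately show ?thesis using measurable_cong by (metis (no_types, lifting))
qed

lemma cont_bdd:
  fixes f :: "'a \<Rightarrow> 'b::real_normed_vector"
  assumes "continuous_on K f" shows "\<exists>B. \<forall>x\<in>K. norm (f x) \<le> B"
proof -
  have "bounded (f ` K)" using compact_continuous_image[OF assms K_compact] by (rule compact_imp_bounded)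
  then show ?thesis by (auto simp: bounded_iff)
qed

end

context fwloc
begin

definition bm :: "((nat \<Rightarrow> 'r) \<times> (nat \<times> nat \<Rightarrow> 'w) \<Rightarrow> real) \<Rightarrow> bool" where
  "bm f \<longleftrightarrow> f \<in> borel_measurable M \<and> (\<exists>B. \<forall>\<omega>\<in>space M. \<bar>f \<omega>\<bar> \<le> B)"

lemma bm_integrable: "bm f \<Longrightarrow> integrable M f"
proof -
  assume "bm f"
  then obtain B where m: "f \<in> borel_measurable M" and b: "\<forall>\<omega>\<in>space M. \<bar>f \<omega>\<bar> \<le> B"
    by (auto simp: bm_def)
  interpret prob_space M by (rule M_prob)
  show ?thesis using m b by (intro integrable_const_bound[where B=B]) auto
qed

lemma bm_add: "bm f \<Longrightarrow> bm g \<Longrightarrow> bm (\<lambda>\<omega>. f \<omega> + g \<omega>)"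
proof -
  assume "bm f" "bm g"
  then obtain B1 B2 where "f \<in> borel_measurable M" "\<forall>\<omega>\<in>space M. \<bar>f \<omega>\<bar> \<le> B1"
     "g \<in> borel_measurable M" "\<forall>\<omega>\<in>space M. \<bar>g \<omega>\<bar> \<le> B2" by (auto simp: bm_def)
  then show ?thesis unfolding bm_def
    by (intro conjI borel_measurable_add exI[of _ "B1 + B2"]) (auto intro: abs_triangle_ineq[THEN order_trans] add_mono)
qed

lemma bm_sum: "finite S \<Longrightarrow> (\<And>t. t \<in> S \<Longrightarrow> bm (f t)) \<Longrightarrow> bm (\<lambda>\<omega>. \<Sum>t\<in>S. f t \<omega>)"
proof (induction S rule: finite_induct)
  case empty then show ?case unfolding bm_def by (auto intro!: exI[of _ 0])
next
  case (insert x F)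
  then show ?case by (simp add: bm_add)
qed

lemma bm_X_loss: "i \<le> N \<Longrightarrow> t < T \<Longrightarrow> bm (\<lambda>\<omega>. loss t (X i \<omega> t) - loss t xstar)"
proof -
  assume i: "i \<le> N" and t: "t < T"
  obtain B where B: "\<forall>x\<in>K. norm (loss t x) \<le> B" using cont_bdd[OF loss_cont[OF t]] by blast
  have m: "(\<lambda>\<omega>. loss t (X i \<omega> t)) \<in> borel_measurable M"
    by (rule comp_meas[OF loss_cont[OF t] X_meas[OF i t]]) (rule X_in_K[OF _ i])
  have "\<bar>loss t (X i \<omega> t) - loss t xstar\<bar> \<le> B + B" if "\<omega> \<in> space M" for \<omega>
  proof -
    have "norm (loss t (X i \<omega> t)) \<le> B" using B X_in_K[OF that i] by blast
    moreover have "norm (loss t xstar) \<le> B" using B xstar_K by blast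
    ultimately show ?thesis by simp
  qed
  then show ?thesis unfolding bm_def using m by (intro conjI borel_measurable_diff measurable_const exI[of _ "B + B"]) auto
qed

lemma inner_bd: "norm a \<le> A1 \<Longrightarrow> v \<in> K \<Longrightarrow> \<bar>a \<bullet> (v - xstar)\<bar> \<le> A1 * (D + D)"
proof -
  assume a: "norm a \<le> A1" and v: "v \<in> K"
  have "\<bar>a \<bullet> (v - xstar)\<bar> \<le> norm a * norm (v - xstar)" by (rule Cauchy_Schwarz_ineq2)
  also have "\<dots> \<le> A1 * (D + D)"
  proof (rule mult_mono)
    show "norm (v - xstar) \<le> D + D"
      using norm_triangle_ineq4[of v xstar] norm_K[OF v] norm_K[OF xstar_K] by simp
    show "0 \<le> A1" using a norm_ge_zero[of a] by linarith
  qed (use a in auto)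
  finally show ?thesis .
qed

lemma bm_grad_term: "i < N \<Longrightarrow> t < T \<Longrightarrow> bm (\<lambda>\<omega>. grad t (X i \<omega> t) \<bullet> (V i \<omega> t - xstar))"
proof -
  assume i: "i < N" and t: "t < T"
  then have i': "i \<le> N" by simp
  obtain B where B: "\<forall>x\<in>K. norm (grad t x) \<le> B" using cont_bdd[OF grad_cont[OF t]] by blast
  have m1: "(\<lambda>\<omega>. grad t (X i \<omega> t)) \<in> borel_measurable M"
    by (rule comp_meas[OF grad_cont[OF t] X_meas[OF i' t]]) (rule X_in_K[OF _ i'])
  have m2: "(\<lambda>\<omega>. V i \<omega> t) \<in> borel_measurable M"
    by (rule V_meas[OF i t]) (rule X_meas[OF i'])
  have "\<bar>grad t (X i \<omega> t) \<bullet> (V i \<omega> t - xstar)\<bar> \<le> B * (D + D)" if "\<omega> \<in> space M" for \<omega>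
    using B X_in_K[OF that i'] V_in_K[OF that i] by (intro inner_bd) auto
  then show ?thesis unfolding bm_def using m1 m2
    by (intro conjI borel_measurable_inner borel_measurable_diff measurable_const exI[of _ "B * (D + D)"]) auto
qed

lemma bm_G_term: "i < N \<Longrightarrow> t < T \<Longrightarrow> bm (\<lambda>\<omega>. G i \<omega> t \<bullet> (V i \<omega> t - xstar))"
proof -
  assume i: "i < N" and t: "t < T"
  then have i': "i \<le> N" by simp
  have m1: "(\<lambda>\<omega>. G i \<omega> t) \<in> borel_measurable M"
    by (rule G_meas[OF i t X_meas[OF i' t]])
  have m2: "(\<lambda>\<omega>. V i \<omega> t) \<in> borel_measurable M"
    by (rule V_meas[OF i t]) (rule X_meas[OF i'])
  have "\<bar>G i \<omega> t \<bullet> (V i \<omega> t - xstar)\<bar> \<le> \<sigma> * (D + D)" if "\<omega> \<in> space M" for \<omega>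
    using G_bound[OF that i t] V_in_K[OF that i] by (intro inner_bd) auto
  then show ?thesis unfolding bm_def using m1 m2
    by (intro conjI borel_measurable_inner borel_measurable_diff measurable_const exI[of _ "\<sigma> * (D + D)"]) auto
qed

end

context fwloc
begin

lemma E1:
  assumes i: "i < N"
  shows "integral\<^sup>L M (\<lambda>\<omega>. \<Sum>t<T. G i \<omega> t \<bullet> (V i \<omega> t - xstar)) \<le> C * \<sigma> * D * sqrt (real T)"
proof -
  let ?f = "\<lambda>\<omega>. \<Sum>t<T. G i \<omega> t \<bullet> (V i \<omega> t - xstar)"
  have bmf: "bm ?f" using bm_sum[of "{..<T}"] bm_G_term[OF i] by simp
  then obtain B where fm: "?f \<in> borel_measurable M" and fB: "\<forall>\<omega>\<in>space M. \<bar>?f \<omega>\<bar> \<le> B"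
    by (auto simp: bm_def)
  show ?thesis
    unfolding seed_space_def
  proof (rule resample_pair_fst[where B=B])
    show "finite {..<N}" "i \<in> {..<N}" using i by auto
    show "prob_space (R j)" if "j \<in> {..<N}" for j using R_prob that by auto
    show "prob_space (PiM ({..<T} \<times> {..<N}) (\<lambda>_. W))" by (rule prob_space_PiM) (use W_prob in auto)
    show "?f \<in> borel_measurable (PiM {..<N} R \<Otimes>\<^sub>M PiM ({..<T} \<times> {..<N}) (\<lambda>_. W))"
      using fm by (simp add: seed_space_def)
    show "\<bar>?f w\<bar> \<le> B" if "w \<in> space (PiM {..<N} R \<Otimes>\<^sub>M PiM ({..<T} \<times> {..<N}) (\<lambda>_. W))" for w
      using fB that by (simp add: seed_space_def)
  next
    fix a b assume a: "a \<in> space (PiM {..<N} R)" and b: "b \<in> space (PiM ({..<T} \<times> {..<N}) (\<lambda>_. W))"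
    have \<omega>: "(a, b) \<in> space M" using a b by (simp add: space_M_iff)
    interpret Ri: prob_space "R i" using R_prob i by auto
    define gs where "gs = G i (a, b)"
    have Xeq: "X i (a(i:=y), b) s = X i (a, b) s" for y s
      unfolding X_def by (rule fw_cong) (use i in auto)
    have Geq: "G i (a(i:=y), b) = gs" for y
      by (rule ext) (simp add: G_def gs_def Xeq)
    have feq: "?f (a(i:=y), b) = (\<Sum>t<T. gs t \<bullet> A i y gs t) - (\<Sum>t<T. gs t \<bullet> xstar)" for y
      by (simp add: V_def Geq inner_diff_right sum_subtractf)
    have gsb: "\<forall>t<T. norm (gs t) \<le> \<sigma>" using G_bound[OF \<omega> i] by (simp add: gs_def)
    have int: "integrable (R i) (\<lambda>y. \<Sum>t<T. gs t \<bullet> A i y gs t)"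
    proof (rule Ri.integrable_const_bound[where B="real T * (\<sigma> * D)"])
      have gsp: "gs \<in> space (PiM UNIV (\<lambda>_::nat. (borel :: 'a measure)))" by (simp add: space_PiM)
      show "(\<lambda>y. \<Sum>t<T. gs t \<bullet> A i y gs t) \<in> borel_measurable (R i)"
      proof (intro borel_measurable_sum borel_measurable_inner measurable_const)
        fix t
        have am: "(\<lambda>(r, gs). A i r gs t) \<in> borel_measurable (R i \<Otimes>\<^sub>M PiM UNIV (\<lambda>_::nat. (borel :: 'a measure)))"
          using A_meas i by blast
        from measurable_compose[OF measurable_Pair2'[OF gsp] am]
        show "(\<lambda>y. A i y gs t) \<in> borel_measurable (R i)" by simp
      qed simp
      show "AE y in R i. norm (\<Sum>t<T. gs t \<bullet> A i y gs t) \<le> real T * (\<sigma> * D)"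
      proof (rule AE_I2)
        fix y assume y: "y \<in> space (R i)"
        have "norm (\<Sum>t<T. gs t \<bullet> A i y gs t) \<le> (\<Sum>t<T. \<sigma> * D)"
        proof (rule sum_norm_le)
          fix t assume t: "t \<in> {..<T}"
          have AK: "A i y gs t \<in> K" using A_in_K i y by blast
          have "norm (gs t \<bullet> A i y gs t) \<le> norm (gs t) * norm (A i y gs t)"
            by (simp add: Cauchy_Schwarz_ineq2)
          also have "\<dots> \<le> \<sigma> * D"
            using gsb t norm_K[OF AK] sigma_pos by (intro mult_mono) auto
          finally show "norm (gs t \<bullet> A i y gs t) \<le> \<sigma> * D" .
        qed
        then show "norm (\<Sum>t<T. gs t \<bullet> A i y gs t) \<le> real T * (\<sigma> * D)" by simp
      qed
    qed
    have "(\<integral>y. ?f (a(i:=y), b) \<partial>R i) = (\<integral>y. (\<Sum>t<T. gs t \<bullet> A i y gs t) \<partial>R i) - (\<Sum>t<T. gs t \<bullet> xstar)"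
      unfolding feq using int by (simp add: Ri.prob_space)
    also have "\<dots> \<le> C * \<sigma> * D * sqrt (real T)"
      using A_regret i gsb xstar_K by blast
    finally show "(\<integral>y. ?f (a(i:=y), b) \<partial>R i) \<le> C * \<sigma> * D * sqrt (real T)" .
  qed
qed

lemma E2:
  assumes i: "i < N" and t: "t < T"
  shows "integral\<^sup>L M (\<lambda>\<omega>. (grad t (X i \<omega> t) - G i \<omega> t) \<bullet> (V i \<omega> t - xstar)) \<le> 0"
proof -
  let ?f = "\<lambda>\<omega>. (grad t (X i \<omega> t) - G i \<omega> t) \<bullet> (V i \<omega> t - xstar)"
  have "bm (\<lambda>\<omega>. grad t (X i \<omega> t) \<bullet> (V i \<omega> t - xstar) + (- 1) * (G i \<omega> t \<bullet> (V i \<omega> t - xstar)))"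
  proof (rule bm_add[OF bm_grad_term[OF i t]])
    show "bm (\<lambda>\<omega>. (- 1) * (G i \<omega> t \<bullet> (V i \<omega> t - xstar)))"
      using bm_G_term[OF i t] unfolding bm_def by auto
  qed
  then have bmf: "bm ?f" by (simp add: inner_diff_left)
  then obtain B where fm: "?f \<in> borel_measurable M" and fB: "\<forall>\<omega>\<in>space M. \<bar>?f \<omega>\<bar> \<le> B"
    by (auto simp: bm_def)
  show ?thesis
    unfolding seed_space_def
  proof (rule resample_pair_snd[where B=B])
    show "finite ({..<T} \<times> {..<N})" "(t, i) \<in> {..<T} \<times> {..<N}" using i t by auto
    show "prob_space W" if "j \<in> {..<T} \<times> {..<N}" for j using W_prob by auto
    show "prob_space (PiM {..<N} R)" by (rule prob_space_PiM) (use R_prob in auto)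
    show "?f \<in> borel_measurable (PiM {..<N} R \<Otimes>\<^sub>M PiM ({..<T} \<times> {..<N}) (\<lambda>_. W))"
      using fm by (simp add: seed_space_def)
    show "\<bar>?f w\<bar> \<le> B" if "w \<in> space (PiM {..<N} R \<Otimes>\<^sub>M PiM ({..<T} \<times> {..<N}) (\<lambda>_. W))" for w
      using fB that by (simp add: seed_space_def)
  next
    fix a b assume a: "a \<in> space (PiM {..<N} R)" and b: "b \<in> space (PiM ({..<T} \<times> {..<N}) (\<lambda>_. W))"
    have \<omega>: "(a, b) \<in> space M" using a b by (simp add: space_M_iff)
    interpret W: prob_space W by (rule W_prob)
    define y where "y = X i (a, b) t"
    define v where "v = V i (a, b) t"
    have Xeq: "X i (a, b((t,i):=w)) s = X i (a, b) s" for w s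
      unfolding X_def by (rule fw_cong) (use i in auto)
    have Geq: "G i (a, b((t,i):=w)) s = G i (a, b) s" if "s \<noteq> t" for w s
      using that by (simp add: G_def Xeq)
    have Gt: "G i (a, b((t,i):=w)) t = orc t y w" for w
      by (simp add: G_def Xeq y_def)
    have Veq: "V i (a, b((t,i):=w)) t = v" for w
      unfolding V_def v_def by (simp, rule A_causal[rule_format, OF i]) (simp add: Geq)
    have feq: "?f (a, b((t,i):=w)) = grad t y \<bullet> (v - xstar) - orc t y w \<bullet> (v - xstar)" for w
      by (simp add: Veq Gt Xeq y_def inner_diff_left)
    have yK: "y \<in> K" using X_in_K[OF \<omega>] i by (simp add: y_def)
    have oi: "integrable W (orc t y)" and oe: "(\<integral>w. orc t y w \<partial>W) = grad t y"
      using orc_unbiased t yK by blast+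
    have oi2: "integrable W (\<lambda>w. orc t y w \<bullet> (v - xstar))"
      using oi by (rule integrable_inner_left)
    have "(\<integral>w. ?f (a, b((t,i):=w)) \<partial>W) = grad t y \<bullet> (v - xstar) - (\<integral>w. orc t y w \<bullet> (v - xstar) \<partial>W)"
      unfolding feq using oi2 by (simp add: W.prob_space)
    also have "\<dots> = 0" using oi oe by simp
    finally show "(\<integral>w. ?f (a, b((t,i):=w)) \<partial>W) \<le> 0" by simp
  qed
qed

end

lemma rec_bound:
  fixes h :: "nat \<Rightarrow> real" and c Rt :: real
  assumes c: "c \<ge> 0"
    and st: "\<And>i. i < N \<Longrightarrow> h (Suc i) \<le> (1 - 2 / (real i + 2)) * h i + 2 / (real i + 2) * Rt + c / 2 * (2 / (real i + 2))\<^sup>2"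
  shows "1 \<le> i \<Longrightarrow> i \<le> N \<Longrightarrow> h i \<le> Rt + 2 * c / (real i + 1)"
proof (induction i)
  case 0 then show ?case by simp
next
  case (Suc i)
  have iN: "i < N" using Suc.prems by simp
  show ?case
  proof (cases "i = 0")
    case True
    then have "h (Suc i) \<le> Rt + c / 2" using st[OF iN] by simp
    also have "\<dots> \<le> Rt + 2 * c / (real (Suc i) + 1)" using True c by simp
    finally show ?thesis .
  next
    case False
    define n where "n = real i"
    have n1: "n \<ge> 1" using False by (simp add: n_def)
    have ih: "h i \<le> Rt + 2 * c / (n + 1)" using Suc.IH False Suc.prems by (simp add: n_def)
    have e: "1 - 2 / (n + 2) = n / (n + 2)" using n1 by (simp add: field_simps)
    have "h (Suc i) \<le> n / (n + 2) * h i + 2 / (n + 2) * Rt + c / 2 * (2 / (n + 2))\<^sup>2"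
      using st[OF iN] e by (simp add: n_def)
    also have "\<dots> \<le> n / (n + 2) * (Rt + 2 * c / (n + 1)) + 2 / (n + 2) * Rt + c / 2 * (2 / (n + 2))\<^sup>2"
      using ih n1 c by (intro add_mono mult_left_mono) auto
    also have "\<dots> = Rt + (2 * c / (n + 2)) * (n / (n + 1) + 1 / (n + 2))"
    proof -
      have p1: "n + 1 \<noteq> 0" "n + 2 \<noteq> 0" using n1 by auto
      show ?thesis by (simp add: divide_simps p1 power2_eq_square; algebra)
    qed
    also have "\<dots> \<le> Rt + (2 * c / (n + 2)) * 1"
    proof -
      have "1 / (n + 2) \<le> 1 / (n + 1)" using n1 by (simp add: field_simps)
      moreover have "n / (n + 1) + 1 / (n + 1) = 1" using n1 by (simp add: field_simps)
      ultimately have "n / (n + 1) + 1 / (n + 2) \<le> 1" by linarith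
      then show ?thesis using c n1 by (intro add_left_mono mult_left_mono) auto
    qed
    also have "\<dots> = Rt + 2 * c / (real (Suc i) + 1)" by (simp add: n_def add.commute)
    finally show ?thesis .
  qed
qed

context fwloc
begin

definition H where "H i \<omega> = (\<Sum>t<T. loss t (X i \<omega> t) - loss t xstar)"
definition Lf where "Lf i \<omega> = (\<Sum>t<T. grad t (X i \<omega> t) \<bullet> (V i \<omega> t - xstar))"

lemma step_t:
  assumes \<omega>: "\<omega> \<in> space M" and i: "i < N" and t: "t < T"
  shows "loss t (X (Suc i) \<omega> t) - loss t xstar
     \<le> (1 - eta i) * (loss t (X i \<omega> t) - loss t xstar) + eta i * (grad t (X i \<omega> t) \<bullet> (V i \<omega> t - xstar))
       + \<beta> / 2 * (eta i)\<^sup>2 * D\<^sup>2"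
proof -
  define y where "y = X i \<omega> t"
  define v where "v = V i \<omega> t"
  define z where "z = X (Suc i) \<omega> t"
  define e where "e = eta i"
  define g where "g = grad t y"
  have yK: "y \<in> K" using X_in_K[OF \<omega>] i by (simp add: y_def)
  have vK: "v \<in> K" using V_in_K[OF \<omega> i] by (simp add: v_def)
  have zK: "z \<in> K" using X_in_K[OF \<omega>] i by (simp add: z_def)
  have e0: "0 \<le> e" using eta_bounds by (simp add: e_def)
  have zy: "z - y = e *\<^sub>R (v - y)" by (simp add: z_def y_def v_def e_def X_Suc algebra_simps)
  have sm: "loss t z - loss t y - g \<bullet> (z - y) \<le> \<beta> / 2 * (norm (z - y))\<^sup>2"
    using smooth_ineq[OF t yK zK] unfolding g_def abs_le_iff by linarith
  have n1: "(norm (z - y))\<^sup>2 = e\<^sup>2 * (norm (v - y))\<^sup>2" using e0 by (simp add: zy power_mult_distrib)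
  have n2: "(norm (v - y))\<^sup>2 \<le> D\<^sup>2"
    using diam vK yK D_nonneg by (intro power_mono) auto
  have n3: "\<beta> / 2 * (norm (z - y))\<^sup>2 \<le> \<beta> / 2 * e\<^sup>2 * D\<^sup>2"
    unfolding n1 using n2 pos_facts by (simp add: mult_left_mono)
  have cg: "loss t y + g \<bullet> (xstar - y) \<le> loss t xstar"
    using convex_grad[OF t yK xstar_K] by (simp add: g_def)
  have gi: "g \<bullet> (z - y) = e * (g \<bullet> (v - xstar)) + e * (g \<bullet> (xstar - y))"
    by (simp add: zy inner_diff_right algebra_simps)
  have "e * (g \<bullet> (xstar - y)) \<le> e * (loss t xstar - loss t y)"
    using cg e0 by (intro mult_left_mono) auto
  then have "loss t z - loss t xstar \<le> (1 - e) * (loss t y - loss t xstar) + e * (g \<bullet> (v - xstar)) + \<beta> / 2 * e\<^sup>2 * D\<^sup>2"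
    using sm n3 gi by (simp add: algebra_simps)
  then show ?thesis by (simp add: y_def v_def z_def e_def g_def)
qed

lemma step_sum:
  assumes \<omega>: "\<omega> \<in> space M" and i: "i < N"
  shows "H (Suc i) \<omega> \<le> (1 - eta i) * H i \<omega> + eta i * Lf i \<omega> + real T * (\<beta> / 2 * (eta i)\<^sup>2 * D\<^sup>2)"
proof -
  have "H (Suc i) \<omega> \<le> (\<Sum>t<T. (1 - eta i) * (loss t (X i \<omega> t) - loss t xstar)
      + eta i * (grad t (X i \<omega> t) \<bullet> (V i \<omega> t - xstar)) + \<beta> / 2 * (eta i)\<^sup>2 * D\<^sup>2)"
    unfolding H_def by (rule sum_mono) (use step_t[OF \<omega> i] in simp)
  also have "\<dots> = (1 - eta i) * H i \<omega> + eta i * Lf i \<omega> + real T * (\<beta> / 2 * (eta i)\<^sup>2 * D\<^sup>2)"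
    by (simp add: H_def Lf_def sum.distrib sum_distrib_left)
  finally show ?thesis .
qed

lemma bm_H: "i \<le> N \<Longrightarrow> bm (H i)"
  unfolding H_def[abs_def] by (rule bm_sum) (auto intro: bm_X_loss)

lemma bm_Lf: "i < N \<Longrightarrow> bm (Lf i)"
  unfolding Lf_def[abs_def] by (rule bm_sum) (auto intro: bm_grad_term)

lemma E_Lf:
  assumes i: "i < N"
  shows "integral\<^sup>L M (Lf i) \<le> C * \<sigma> * D * sqrt (real T)"
proof -
  let ?g = "\<lambda>\<omega>. \<Sum>t<T. G i \<omega> t \<bullet> (V i \<omega> t - xstar)"
  let ?d = "\<lambda>t \<omega>. (grad t (X i \<omega> t) - G i \<omega> t) \<bullet> (V i \<omega> t - xstar)"
  have eq: "Lf i \<omega> = ?g \<omega> + (\<Sum>t<T. ?d t \<omega>)" for \<omega>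
    by (simp add: Lf_def inner_diff_left sum.distrib[symmetric])
  have ig: "integrable M ?g"
    by (rule bm_integrable, rule bm_sum) (auto intro: bm_G_term[OF i])
  have bd: "bm (?d t)" if t: "t < T" for t
  proof -
    have "bm (\<lambda>\<omega>. grad t (X i \<omega> t) \<bullet> (V i \<omega> t - xstar) + (- 1) * (G i \<omega> t \<bullet> (V i \<omega> t - xstar)))"
    proof (rule bm_add[OF bm_grad_term[OF i t]])
      show "bm (\<lambda>\<omega>. (- 1) * (G i \<omega> t \<bullet> (V i \<omega> t - xstar)))"
        using bm_G_term[OF i t] unfolding bm_def by auto
    qed
    then show ?thesis by (simp add: inner_diff_left)
  qed
  have id: "integrable M (?d t)" if "t \<in> {..<T}" for t using bd that bm_integrable by auto
  have "integral\<^sup>L M (Lf i) = integral\<^sup>L M ?g + (\<Sum>t<T. integral\<^sup>L M (?d t))"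
  proof -
    have isum: "integrable M (\<lambda>\<omega>. \<Sum>t<T. ?d t \<omega>)" using id by (rule Bochner_Integration.integrable_sum)
    have "integral\<^sup>L M (\<lambda>\<omega>. ?g \<omega> + (\<Sum>t<T. ?d t \<omega>)) = integral\<^sup>L M ?g + integral\<^sup>L M (\<lambda>\<omega>. \<Sum>t<T. ?d t \<omega>)"
      by (rule Bochner_Integration.integral_add[OF ig isum])
    also have "integral\<^sup>L M (\<lambda>\<omega>. \<Sum>t<T. ?d t \<omega>) = (\<Sum>t<T. integral\<^sup>L M (?d t))"
      using id by (rule Bochner_Integration.integral_sum)
    finally show ?thesis unfolding eq .
  qed
  also have "\<dots> \<le> C * \<sigma> * D * sqrt (real T) + (\<Sum>t<T. (0::real))"
    by (intro add_mono E1[OF i] sum_mono E2[OF i]) auto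
  finally show ?thesis by simp
qed

lemma E_step:
  assumes i: "i < N"
  shows "integral\<^sup>L M (H (Suc i)) \<le> (1 - eta i) * integral\<^sup>L M (H i) + eta i * (C * \<sigma> * D * sqrt (real T))
           + real T * (\<beta> / 2 * (eta i)\<^sup>2 * D\<^sup>2)"
proof -
  interpret prob_space M by (rule M_prob)
  have i1: "integrable M (H (Suc i))" using bm_H i bm_integrable by simp
  have i2: "integrable M (H i)" using bm_H i bm_integrable by simp
  have i3: "integrable M (Lf i)" using bm_Lf i bm_integrable by simp
  have "integral\<^sup>L M (H (Suc i)) \<le> integral\<^sup>L M (\<lambda>\<omega>. (1 - eta i) * H i \<omega> + eta i * Lf i \<omega> + real T * (\<beta> / 2 * (eta i)\<^sup>2 * D\<^sup>2))"
    by (rule integral_mono[OF i1]) (use i2 i3 step_sum i in auto)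
  also have "\<dots> = (1 - eta i) * integral\<^sup>L M (H i) + eta i * integral\<^sup>L M (Lf i) + real T * (\<beta> / 2 * (eta i)\<^sup>2 * D\<^sup>2)"
    using i2 i3 by (simp add: prob_space)
  also have "\<dots> \<le> (1 - eta i) * integral\<^sup>L M (H i) + eta i * (C * \<sigma> * D * sqrt (real T)) + real T * (\<beta> / 2 * (eta i)\<^sup>2 * D\<^sup>2)"
    using E_Lf[OF i] eta_bounds[of i] by (simp add: mult_left_mono)
  finally show ?thesis .
qed

lemma main_bound: "integral\<^sup>L M (H N) \<le> (C + 2) * \<sigma> * D * sqrt (real T)"
proof -
  define c where "c = \<beta> * D\<^sup>2 * real T"
  define Rt where "Rt = C * \<sigma> * D * sqrt (real T)"
  have c0: "c \<ge> 0" using pos_facts by (simp add: c_def)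
  have "integral\<^sup>L M (H N) \<le> Rt + 2 * c / (real N + 1)"
  proof (rule rec_bound[where h = "\<lambda>i. integral\<^sup>L M (H i)", OF c0 _ N_pos order_refl])
    fix i assume i: "i < N"
    show "integral\<^sup>L M (H (Suc i)) \<le> (1 - 2 / (real i + 2)) * integral\<^sup>L M (H i) + 2 / (real i + 2) * Rt
        + c / 2 * (2 / (real i + 2))\<^sup>2"
      using E_step[OF i] by (simp add: eta_def Rt_def c_def algebra_simps)
  qed
  also have "\<dots> \<le> Rt + 2 * c / real N"
    using c0 N_pos by (intro add_left_mono divide_left_mono) auto
  also have "2 * c / real N = 2 * (\<sigma> * D * sqrt (real T))"
  proof -
    have sT: "sqrt (real T) * sqrt (real T) = real T" by simp
    have nz: "\<beta> \<noteq> 0" "D \<noteq> 0" "\<sigma> \<noteq> 0" "sqrt (real T) \<noteq> 0" using pos_facts sigma_pos by auto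
    have "2 * c / real N = 2 * (\<beta> * D\<^sup>2 * (sqrt (real T) * sqrt (real T))) / (\<beta> * D * sqrt (real T) / \<sigma>)"
      unfolding c_def N_def sT ..
    also have "\<dots> = 2 * (\<sigma> * D * sqrt (real T))" using nz by (simp add: field_simps power2_eq_square)
    finally show ?thesis .
  qed
  finally show ?thesis by (simp add: Rt_def algebra_simps)
qed

end

theorem theorem1:
  fixes K :: "'a::euclidean_space set" and D \<beta> \<sigma> C :: real and T N :: nat
    and loss :: "nat \<Rightarrow> 'a \<Rightarrow> real" and grad :: "nat \<Rightarrow> 'a \<Rightarrow> 'a"
    and orc :: "nat \<Rightarrow> 'a \<Rightarrow> 'w \<Rightarrow> 'a" and W :: "'w measure"
    and A :: "nat \<Rightarrow> 'r \<Rightarrow> (nat \<Rightarrow> 'a) \<Rightarrow> nat \<Rightarrow> 'a" and R :: "nat \<Rightarrow> 'r measure"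
    and xstar :: 'a
  assumes K_compact: "compact K" and K_convex: "convex K" and K_zero: "0 \<in> K"
    and diam: "\<forall>x\<in>K. \<forall>y\<in>K. norm (x - y) \<le> D"
    and sigma_pos: "\<sigma> > 0"
    and N_pos: "N \<ge> 1" and N_def: "real N = \<beta> * D * sqrt (real T) / \<sigma>"
    and loss_convex: "\<forall>t<T. convex_on K (loss t)"
    and loss_grad: "\<forall>t<T. \<forall>x\<in>K. (loss t has_derivative (\<lambda>h. grad t x \<bullet> h)) (at x within K)"
    and smooth: "\<forall>t<T. \<forall>x\<in>K. \<forall>y\<in>K. norm (grad t x - grad t y) \<le> \<beta> * norm (x - y)"
    and W_prob: "prob_space W"
    and orc_meas: "\<forall>t<T. (\<lambda>(x, w). orc t x w) \<in> borel_measurable (borel \<Otimes>\<^sub>M W)"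
    and orc_unbiased: "\<forall>t<T. \<forall>x\<in>K. integrable W (orc t x) \<and> (\<integral>w. orc t x w \<partial>W) = grad t x"
    and orc_bound: "\<forall>t<T. \<forall>x\<in>K. \<forall>w\<in>space W. (norm (orc t x w))\<^sup>2 \<le> \<sigma>\<^sup>2"
    and R_prob: "\<forall>i<N. prob_space (R i)"
    and A_meas: "\<forall>i<N. \<forall>t. (\<lambda>(r, gs). A i r gs t)
                    \<in> borel_measurable (R i \<Otimes>\<^sub>M PiM UNIV (\<lambda>_::nat. (borel :: 'a measure)))"
    and A_in_K: "\<forall>i<N. \<forall>r\<in>space (R i). \<forall>gs t. A i r gs t \<in> K"
    and A_causal: "\<forall>i<N. \<forall>r gs gs' t. (\<forall>s<t. gs s = gs' s) \<longrightarrow> A i r gs t = A i r gs' t"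
    and A_regret: "\<forall>i<N. \<forall>gs. (\<forall>t<T. norm (gs t) \<le> \<sigma>) \<longrightarrow>
                    (\<forall>x\<in>K. (\<integral>r. (\<Sum>t<T. gs t \<bullet> A i r gs t) \<partial>R i) - (\<Sum>t<T. gs t \<bullet> x)
                              \<le> C * \<sigma> * D * sqrt (real T))"
    and xstar_K: "xstar \<in> K"
  shows "(\<integral>\<omega>. (\<Sum>t<T. loss t (fw_iter N A orc (fst \<omega>) (snd \<omega>) t) - loss t xstar)
            \<partial>seed_space N T R W) \<le> (C + 2) * \<sigma> * D * sqrt (real T)"
  proof -
  interpret fwloc K D \<beta> \<sigma> C T N loss grad orc W A R xstar
    by (rule fwloc.intro[OF assms])
  have eq: "(\<lambda>\<omega>. \<Sum>t<T. loss t (fw_iter N A orc (fst \<omega>) (snd \<omega>) t) - loss t xstar) = H N"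
    by (simp add: fun_eq_iff H_def X_def)
  show ?thesis unfolding eq by (rule main_bound)
qed

end
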